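(* Let $p\in]1,+\infty[$ and set $q=2$ if $p\in]1,2]$, $q=2(p-1)$ if $p\ge2$. Consider the implicit scheme $\frac{\mathbf u^k-\mathbf u^{k-1}}{\tau_{k-1}}=-\Delta_p^{\mathbf K}\mathbf u^k+\mathbf f^k$, $k\in[N]$, $\mathbf u^0=\mathbf g$, with step sizes $\tau_{k-1}>0$. Assume $I_n\mathbf K$ is nonnegative, measurable, symmetric with $\sup_x\int I_n\mathbf K(x,y)dy<\infty$; $I_n\mathbf g\in L^{\max(p,q)}(\Omega)$ with $\sup_n\|I_n\mathbf g\|_{L^q(\Omega)}<\infty$; $\bar f_n\in L^1([0,T];L^{\max(p,q)}(\Omega))$ with $\sup_n\|\bar f_n\|_{L^1([0,T];L^q(\Omega))}<\infty$. Assume in addition $\sup_n\|I_n\mathbf K\|_{L^{\infty,1}(\Omega^2)}<+\infty$ and $\sup_n\|\bar f_n\|_{\mathrm{BV}([0,T];L^2(\Omega))}<+\infty$. Then $\sup_{t\in[0,T],n\in\mathbb N}\|\tilde u_n(\cdot,t)-\bar u_n(\cdot,t)\|_{L^2(\Omega)}\le C\tau$, where $C>0$ does not depend on $(n,N,T)$.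
   Context: $d\ge1$, $\Omega=[0,1]^d$, hypercubic cells $\Omega^n_{\mathbf i}$ of measures $h_{\mathbf i}$, $I_n$ the piecewise-constant injector. $\Psi(s)=|s|^{p-2}s$; $(\Delta_p^{\mathbf K}\mathbf u)_{\mathbf i}=-\sum_{\mathbf j}h_{\mathbf j}\mathbf K_{\mathbf i\mathbf j}\Psi(\mathbf u_{\mathbf j}-\mathbf u_{\mathbf i})$. Time partition $0=t_0<\dots<t_N=T$, $\tau_{k-1}=t_k-t_{k-1}$, $\tau=\max\tau_{k-1}$. With $u_n^k=I_n\mathbf u^k$, $f_n^k=I_n\mathbf f^k$: for $t\in]t_{k-1},t_k]$, $\tilde u_n(x,t)=\frac{t_k-t}{\tau_{k-1}}u_n^{k-1}(x)+\frac{t-t_{k-1}}{\tau_{k-1}}u_n^k(x)$, $\bar u_n(x,t)=u_n^k(x)$, $\bar f_n(x,t)=f_n^k(x)$. $\|F\|_{L^{\infty,1}(\Omega^2)}=\sup_x\int|F(x,y)|dy$. For $h:\Omega\times[0,T]\to\mathbb R$, $\mathrm{Var}_2(h)=\sup_{0\le s_0<\dots<s_M\le T}\sum_i\|h(\cdot,s_i)-h(\cdot,s_{i-1})\|_{L^2(\Omega)}$ and $\|h\|_{\mathrm{BV}([0,T];L^2(\Omega))}=\|h(\cdot,0)\|_{L^2(\Omega)}+\mathrm{Var}_2(h)$. *)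

theory Defs
  imports "HOL-Analysis.Analysis"
begin

definition Omega :: "(real^'d) set" where
  "Omega = cbox 0 One"

definition is_grid :: "nat set \<Rightarrow> (nat \<Rightarrow> (real^'d) set) \<Rightarrow> bool" where
  "is_grid Idx cell \<longleftrightarrow> finite Idx \<and> Idx \<noteq> {} \<and>
     (\<forall>i\<in>Idx. \<forall>j\<in>Idx. i \<noteq> j \<longrightarrow> cell i \<inter> cell j = {}) \<and>
     (\<Union>i\<in>Idx. cell i) = Omega \<and>
     (\<forall>i\<in>Idx. \<exists>a s. s > 0 \<and> box a (a + s *\<^sub>R One) \<subseteq> cell i \<and>
                        cell i \<subseteq> cbox a (a + s *\<^sub>R One))"

definition hcell :: "(nat \<Rightarrow> (real^'d) set) \<Rightarrow> nat \<Rightarrow> real" where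
  "hcell cell i = measure lebesgue (cell i)"

definition injn :: "nat set \<Rightarrow> (nat \<Rightarrow> (real^'d) set) \<Rightarrow> (nat \<Rightarrow> real) \<Rightarrow> real^'d \<Rightarrow> real" where
  "injn Idx cell v x = (\<Sum>i\<in>Idx. v i * indicator (cell i) x)"

definition injK :: "nat set \<Rightarrow> (nat \<Rightarrow> (real^'d) set) \<Rightarrow> (nat \<Rightarrow> nat \<Rightarrow> real)
                    \<Rightarrow> real^'d \<Rightarrow> real^'d \<Rightarrow> real" where
  "injK Idx cell K x y =
     (\<Sum>i\<in>Idx. \<Sum>j\<in>Idx. K i j * indicator (cell i) x * indicator (cell j) y)"

definition Psi :: "real \<Rightarrow> real \<Rightarrow> real" where
  "Psi p s = \<bar>s\<bar> powr (p - 2) * s"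

definition DeltapK :: "real \<Rightarrow> nat set \<Rightarrow> (nat \<Rightarrow> (real^'d) set) \<Rightarrow> (nat \<Rightarrow> nat \<Rightarrow> real)
                        \<Rightarrow> (nat \<Rightarrow> real) \<Rightarrow> nat \<Rightarrow> real" where
  "DeltapK p Idx cell K u i = - (\<Sum>j\<in>Idx. hcell cell j * K i j * Psi p (u j - u i))"

definition qexp :: "real \<Rightarrow> real" where
  "qexp p = (if p \<le> 2 then 2 else 2 * (p - 1))"

definition Lnorm :: "real \<Rightarrow> (real^'d \<Rightarrow> real) \<Rightarrow> real" where
  "Lnorm r F = (LINT x:Omega|lebesgue. \<bar>F x\<bar> powr r) powr (1 / r)"

definition Linf1 :: "(real^'d \<Rightarrow> real^'d \<Rightarrow> real) \<Rightarrow> real" where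
  "Linf1 F = (SUP x\<in>Omega. LINT y:Omega|lebesgue. \<bar>F x y\<bar>)"

text \<open>Time partition 0 = t_0 < ... < t_N = T (T = t N), step sizes and \<tau>.\<close>
definition time_partition :: "nat \<Rightarrow> (nat \<Rightarrow> real) \<Rightarrow> bool" where
  "time_partition N t \<longleftrightarrow> N \<ge> 1 \<and> t 0 = 0 \<and> (\<forall>k<N. t k < t (Suc k))"

definition taumax :: "nat \<Rightarrow> (nat \<Rightarrow> real) \<Rightarrow> real" where
  "taumax N t = Max ((\<lambda>k. t (Suc k) - t k) ` {..<N})"

text \<open>Index k with s \<in> ]t_{k-1}, t_k] (k = 1 for s = 0).\<close>
definition kidx :: "(nat \<Rightarrow> real) \<Rightarrow> real \<Rightarrow> nat" where
  "kidx t s = (LEAST k. 1 \<le> k \<and> s \<le> t k)"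

definition tildeU :: "(nat \<Rightarrow> real) \<Rightarrow> (nat \<Rightarrow> real^'d \<Rightarrow> real) \<Rightarrow> real \<Rightarrow> real^'d \<Rightarrow> real" where
  "tildeU t U s x =
     (let k = kidx t s; tk = t (k - 1) in
        (t k - s) / (t k - tk) * U (k - 1) x + (s - tk) / (t k - tk) * U k x)"

definition barU :: "(nat \<Rightarrow> real) \<Rightarrow> (nat \<Rightarrow> real^'d \<Rightarrow> real) \<Rightarrow> real \<Rightarrow> real^'d \<Rightarrow> real" where
  "barU t U s x = U (kidx t s) x"

definition Var2 :: "real \<Rightarrow> (real \<Rightarrow> real^'d \<Rightarrow> real) \<Rightarrow> real" where
  "Var2 T h = Sup {(\<Sum>i\<in>{1..M}. Lnorm 2 (\<lambda>x. h (s i) x - h (s (i - 1)) x)) | s M.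
                    0 \<le> s 0 \<and> (\<forall>i<M. s i < s (Suc i)) \<and> s M \<le> T}"

definition BVnorm :: "real \<Rightarrow> (real \<Rightarrow> real^'d \<Rightarrow> real) \<Rightarrow> real" where
  "BVnorm T h = Lnorm 2 (h 0) + Var2 T h"

definition L1Lnorm :: "real \<Rightarrow> real \<Rightarrow> (real \<Rightarrow> real^'d \<Rightarrow> real) \<Rightarrow> real" where
  "L1Lnorm T r h = (LINT s:{0..T}|lborel. Lnorm r (h s))"

definition scheme :: "real \<Rightarrow> nat set \<Rightarrow> (nat \<Rightarrow> (real^'d) set) \<Rightarrow> (nat \<Rightarrow> nat \<Rightarrow> real)
     \<Rightarrow> (nat \<Rightarrow> real) \<Rightarrow> nat \<Rightarrow> (nat \<Rightarrow> real) \<Rightarrow> (nat \<Rightarrow> nat \<Rightarrow> real) \<Rightarrow> (nat \<Rightarrow> nat \<Rightarrow> real) \<Rightarrow> bool" where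
  "scheme p Idx cell K g N t f u \<longleftrightarrow>
     (\<forall>i\<in>Idx. u 0 i = g i) \<and>
     (\<forall>k\<in>{1..N}. \<forall>i\<in>Idx.
        (u k i - u (k - 1) i) / (t k - t (k - 1)) = - DeltapK p Idx cell K (u k) i + f k i)"

end

theory Submission
  imports Defs
begin

definition nrm :: "nat set \<Rightarrow> (nat \<Rightarrow> (real^'d) set) \<Rightarrow> (nat \<Rightarrow> real) \<Rightarrow> real" where
  "nrm Idx cell w = L2_set (\<lambda>i. sqrt (hcell cell i) * w i) Idx"

lemma hcell_nonneg: "0 \<le> hcell cell i" unfolding hcell_def by simp

lemma nrm_sq: "finite Idx \<Longrightarrow> (nrm Idx cell w)^2 = (\<Sum>i\<in>Idx. hcell cell i * (w i)^2)"
  unfolding nrm_def L2_set_def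
  by (simp add: sum_nonneg power_mult_distrib hcell_nonneg)

lemma nrm_nonneg: "0 \<le> nrm Idx cell w" unfolding nrm_def by simp

lemma nrm_triangle: "nrm Idx cell (\<lambda>i. a i + b i) \<le> nrm Idx cell a + nrm Idx cell b"
  unfolding nrm_def using L2_set_triangle_ineq[of "\<lambda>i. sqrt (hcell cell i) * a i" "\<lambda>i. sqrt (hcell cell i) * b i" Idx]
  by (simp add: distrib_left)

lemma nrm_scale: "0 \<le> c \<Longrightarrow> nrm Idx cell (\<lambda>i. c * a i) = c * nrm Idx cell a"
  unfolding nrm_def by (subst L2_set_right_distrib) (auto simp: ac_simps)

lemma nrm_abs_scale: "nrm Idx cell (\<lambda>i. c * a i) = \<bar>c\<bar> * nrm Idx cell a"
proof -
  have "nrm Idx cell (\<lambda>i. c * a i) = nrm Idx cell (\<lambda>i. \<bar>c\<bar> * a i)"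
    unfolding nrm_def L2_set_def by (simp add: power_mult_distrib)
  then show ?thesis by (simp add: nrm_scale)
qed

lemma nrm_cong: "(\<And>i. i \<in> Idx \<Longrightarrow> a i = b i) \<Longrightarrow> nrm Idx cell a = nrm Idx cell b"
  unfolding nrm_def by (rule L2_set_cong) auto

lemma nrm_CS: "(\<Sum>i\<in>Idx. hcell cell i * (a i * b i)) \<le> nrm Idx cell a * nrm Idx cell b"
proof -
  have "(\<Sum>i\<in>Idx. hcell cell i * (a i * b i)) \<le> (\<Sum>i\<in>Idx. \<bar>sqrt (hcell cell i) * a i\<bar> * \<bar>sqrt (hcell cell i) * b i\<bar>)"
  proof (rule sum_mono)
    fix i
    have "hcell cell i * (a i * b i) = (sqrt (hcell cell i) * a i) * (sqrt (hcell cell i) * b i)"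
      using hcell_nonneg[of cell i] by (simp add: algebra_simps flip: real_sqrt_mult) 
    also have "\<dots> \<le> \<bar>sqrt (hcell cell i) * a i\<bar> * \<bar>sqrt (hcell cell i) * b i\<bar>"
      by (metis abs_ge_self abs_mult)
    finally show "hcell cell i * (a i * b i) \<le> \<bar>sqrt (hcell cell i) * a i\<bar> * \<bar>sqrt (hcell cell i) * b i\<bar>" .
  qed
  also have "\<dots> \<le> nrm Idx cell a * nrm Idx cell b" unfolding nrm_def by (rule L2_set_mult_ineq)
  finally show ?thesis .
qed

lemma Psi_odd: "Psi p (- s) = - Psi p s" unfolding Psi_def by simp

lemma Psi_alt: "Psi p s = sgn s * \<bar>s\<bar> powr (p - 1)"
proof (cases "s = 0")
  case True then show ?thesis by (simp add: Psi_def)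
next
  case False
  have "\<bar>s\<bar> powr (p - 1) = \<bar>s\<bar> powr ((p - 2) + 1)" by simp
  also have "\<dots> = \<bar>s\<bar> powr (p - 2) * \<bar>s\<bar> powr 1" by (rule powr_add)
  also have "\<dots> = \<bar>s\<bar> powr (p - 2) * \<bar>s\<bar>" using False by simp
  finally have "\<bar>s\<bar> powr (p - 1) = \<bar>s\<bar> powr (p - 2) * \<bar>s\<bar>" .
  then show ?thesis unfolding Psi_def using False
    by (cases "s > 0") (auto simp: sgn_if)
qed

lemma Psi_cases: "Psi p x = (if x < 0 then - ((- x) powr (p - 1)) else x powr (p - 1))"
  unfolding Psi_alt by (cases "x < 0") (auto simp: sgn_if)

lemma Psi_mono: assumes "p > 1" "a \<le> b" shows "Psi p a \<le> Psi p b"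
proof -
  have m: "x \<le> y \<Longrightarrow> 0 \<le> x \<Longrightarrow> x powr (p - 1) \<le> y powr (p - 1)" for x y :: real
    using assms(1) by (intro powr_mono2) auto
  show ?thesis
  proof (cases "a < 0")
    case False
    then have "\<not> b < 0" using assms by linarith
    then show ?thesis using False m[of a b] assms(2) unfolding Psi_cases[of p a] Psi_cases[of p b] by simp
  next
    case True
    show ?thesis
    proof (cases "b < 0")
      case True2: True
      have "(- b) powr (p - 1) \<le> (- a) powr (p - 1)" using m[of "-b" "-a"] assms True2 by simp
      then show ?thesis using True True2 unfolding Psi_cases[of p a] Psi_cases[of p b] by simp
    next
      case False2: False
      have x: "0 \<le> (- a) powr (p - 1)" "0 \<le> b powr (p - 1)" by simp_all
      have y: "Psi p a = - ((- a) powr (p - 1))" using True by (simp add: Psi_cases)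
      have z: "Psi p b = b powr (p - 1)" using False2 by (simp add: Psi_cases)
      show ?thesis unfolding y z using x by linarith
    qed
  qed
qed

lemma Psi_monot: assumes "p > 1" shows "0 \<le> (Psi p a - Psi p b) * (a - b)"
proof (cases "a \<le> b")
  case True
  then have "Psi p a \<le> Psi p b" by (rule Psi_mono[OF assms])
  then show ?thesis using True by (intro mult_nonpos_nonpos) auto
next
  case False
  then have "Psi p b \<le> Psi p a" by (intro Psi_mono[OF assms]) auto
  then show ?thesis using False by (intro mult_nonneg_nonneg) auto
qed

lemma Delta_monotone:
  assumes fin: "finite Idx" and p: "p > 1"
    and K: "\<forall>i\<in>Idx. \<forall>j\<in>Idx. 0 \<le> K i j \<and> K i j = K j i"
  shows "0 \<le> (\<Sum>i\<in>Idx. hcell cell i * ((DeltapK p Idx cell K u i - DeltapK p Idx cell K w i) * (u i - w i)))"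
proof -
  let ?h = "hcell cell"
  define T where "T i j = ?h i * ?h j * K i j * (Psi p (u j - u i) - Psi p (w j - w i))" for i j
  have S1: "(\<Sum>i\<in>Idx. ?h i * ((DeltapK p Idx cell K u i - DeltapK p Idx cell K w i) * (u i - w i)))
        = - (\<Sum>i\<in>Idx. \<Sum>j\<in>Idx. T i j * (u i - w i))"
  proof (subst sum_negf[symmetric], rule sum.cong[OF refl])
    fix i assume i: "i \<in> Idx"
    define X where "X = (\<Sum>j\<in>Idx. ?h j * K i j * (Psi p (u j - u i) - Psi p (w j - w i)))"
    have dX: "DeltapK p Idx cell K u i - DeltapK p Idx cell K w i = - X"
      unfolding DeltapK_def X_def by (simp add: right_diff_distrib sum_subtractf)
    have tX: "(\<Sum>j\<in>Idx. T i j * (u i - w i)) = ?h i * (u i - w i) * X"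
      unfolding T_def X_def sum_distrib_left by (rule sum.cong[OF refl]) (simp add: algebra_simps)
    show "?h i * ((DeltapK p Idx cell K u i - DeltapK p Idx cell K w i) * (u i - w i)) = - (\<Sum>j\<in>Idx. T i j * (u i - w i))"
      unfolding dX tX by (simp add: algebra_simps)
  qed
  have Tsym: "T j i = - T i j" if "i \<in> Idx" "j \<in> Idx" for i j
  proof -
    have k: "K j i = K i j" using K that by auto
    have a: "Psi p (u i - u j) = - Psi p (u j - u i)" using Psi_odd[of p "u j - u i"] by simp
    have b: "Psi p (w i - w j) = - Psi p (w j - w i)" using Psi_odd[of p "w j - w i"] by simp
    show ?thesis unfolding T_def k a b by (simp add: algebra_simps)
  qed
  have "(\<Sum>i\<in>Idx. \<Sum>j\<in>Idx. T i j * (u i - w i)) = (\<Sum>j\<in>Idx. \<Sum>i\<in>Idx. T i j * (u i - w i))"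
    by (rule sum.swap)
  also have "\<dots> = (\<Sum>j\<in>Idx. \<Sum>i\<in>Idx. - (T j i * (u i - w i)))"
  proof (rule sum.cong[OF refl], rule sum.cong[OF refl])
    fix j i assume "j \<in> Idx" "i \<in> Idx"
    from Tsym[OF this] show "T i j * (u i - w i) = - (T j i * (u i - w i))" by simp
  qed
  also have "\<dots> = - (\<Sum>i\<in>Idx. \<Sum>j\<in>Idx. T i j * (u j - w j))"
    by (simp add: sum_negf)
  finally have S2: "(\<Sum>i\<in>Idx. \<Sum>j\<in>Idx. T i j * (u i - w i)) = - (\<Sum>i\<in>Idx. \<Sum>j\<in>Idx. T i j * (u j - w j))" .
  have "0 \<le> (\<Sum>i\<in>Idx. \<Sum>j\<in>Idx. T i j * ((u j - w j) - (u i - w i)))"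
  proof (intro sum_nonneg)
    fix i j assume "i \<in> Idx" "j \<in> Idx"
    then have K0: "0 \<le> K i j" using K by blast
    have mo: "0 \<le> (Psi p (u j - u i) - Psi p (w j - w i)) * ((u j - u i) - (w j - w i))"
      by (rule Psi_monot[OF p])
    have "0 \<le> (?h i * ?h j * K i j) * ((Psi p (u j - u i) - Psi p (w j - w i)) * ((u j - u i) - (w j - w i)))"
      by (rule mult_nonneg_nonneg[OF mult_nonneg_nonneg[OF mult_nonneg_nonneg[OF hcell_nonneg hcell_nonneg] K0] mo])
    moreover have "T i j * ((u j - w j) - (u i - w i)) = (?h i * ?h j * K i j) * ((Psi p (u j - u i) - Psi p (w j - w i)) * ((u j - u i) - (w j - w i)))"
      unfolding T_def by (simp add: algebra_simps)
    ultimately show "0 \<le> T i j * ((u j - w j) - (u i - w i))" by simp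
  qed
  also have "\<dots> = (\<Sum>i\<in>Idx. \<Sum>j\<in>Idx. T i j * (u j - w j)) - (\<Sum>i\<in>Idx. \<Sum>j\<in>Idx. T i j * (u i - w i))"
    by (simp add: right_diff_distrib sum_subtractf)
  finally show ?thesis unfolding S1 using S2 by linarith
qed

lemma contraction:
  assumes fin: "finite Idx" and p: "p > 1"
    and K: "\<forall>i\<in>Idx. \<forall>j\<in>Idx. 0 \<le> K i j \<and> K i j = K j i"
    and tau: "\<tau> > 0"
    and eu: "\<And>i. i \<in> Idx \<Longrightarrow> u i + \<tau> * DeltapK p Idx cell K u i = a i"
    and ew: "\<And>i. i \<in> Idx \<Longrightarrow> w i + \<tau> * DeltapK p Idx cell K w i = b i"
  shows "nrm Idx cell (\<lambda>i. u i - w i) \<le> nrm Idx cell (\<lambda>i. a i - b i)"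
proof -
  let ?h = "hcell cell" and ?A = "DeltapK p Idx cell K"
  let ?e = "\<lambda>i. u i - w i" and ?d = "\<lambda>i. a i - b i"
  have "(nrm Idx cell ?e)^2 = (\<Sum>i\<in>Idx. ?h i * (?e i * ?e i))"
    using nrm_sq[OF fin, of cell ?e] by (simp only: power2_eq_square)
  also have "\<dots> \<le> (\<Sum>i\<in>Idx. ?h i * (?e i * ?e i)) + \<tau> * (\<Sum>i\<in>Idx. ?h i * ((?A u i - ?A w i) * (u i - w i)))"
    using mult_nonneg_nonneg[OF less_imp_le[OF tau] Delta_monotone[OF fin p K, of cell u w]] by linarith
  also have "\<dots> = (\<Sum>i\<in>Idx. ?h i * (?e i * ?d i))"
  proof -
    have dd: "a i - b i = ?e i + \<tau> * (?A u i - ?A w i)" if "i \<in> Idx" for i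
      using eu[OF that] ew[OF that] by (simp add: right_diff_distrib)
    have "(\<Sum>i\<in>Idx. ?h i * (?e i * ?d i)) = (\<Sum>i\<in>Idx. ?h i * (?e i * ?e i) + \<tau> * (?h i * ((?A u i - ?A w i) * (u i - w i))))"
      by (rule sum.cong[OF refl]) (simp add: dd algebra_simps)
    also have "\<dots> = (\<Sum>i\<in>Idx. ?h i * (?e i * ?e i)) + \<tau> * (\<Sum>i\<in>Idx. ?h i * ((?A u i - ?A w i) * (u i - w i)))"
      by (simp add: sum.distrib sum_distrib_left)
    finally show ?thesis by (rule sym)
  qed
  also have "\<dots> \<le> nrm Idx cell ?e * nrm Idx cell ?d" by (rule nrm_CS)
  finally have *: "(nrm Idx cell ?e)^2 \<le> nrm Idx cell ?e * nrm Idx cell ?d" .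
  show ?thesis
  proof (cases "nrm Idx cell ?e = 0")
    case True then show ?thesis using nrm_nonneg[of Idx cell ?d] by simp
  next
    case False
    then have "nrm Idx cell ?e > 0" using nrm_nonneg[of Idx cell ?e] by simp
    then show ?thesis using * by (metis mult_le_cancel_left_pos power2_eq_square)
  qed
qed

lemma pow_split:
  fixes x y e q :: real
  assumes "0 < e" "e \<le> q"
  shows "\<bar>x - y\<bar> powr e \<le> 1 + 2 powr q * (\<bar>x\<bar> powr q + \<bar>y\<bar> powr q)"
proof -
  have q: "q > 0" using assms by linarith
  have 1: "\<bar>x - y\<bar> powr e \<le> 1 + \<bar>x - y\<bar> powr q"
  proof (cases "\<bar>x - y\<bar> \<le> 1")
    case True
    then have "\<bar>x - y\<bar> powr e \<le> 1" using assms by (intro powr_le1) auto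
    then show ?thesis by (smt (verit) powr_ge_zero)
  next
    case False
    then have "\<bar>x - y\<bar> powr e \<le> \<bar>x - y\<bar> powr q" using assms by (intro powr_mono) auto
    then show ?thesis by simp
  qed
  have "\<bar>x - y\<bar> \<le> 2 * max \<bar>x\<bar> \<bar>y\<bar>" by linarith
  then have "\<bar>x - y\<bar> powr q \<le> (2 * max \<bar>x\<bar> \<bar>y\<bar>) powr q" using q by (intro powr_mono2) auto
  also have "\<dots> = 2 powr q * max \<bar>x\<bar> \<bar>y\<bar> powr q" by (simp add: powr_mult)
  also have "max \<bar>x\<bar> \<bar>y\<bar> powr q \<le> \<bar>x\<bar> powr q + \<bar>y\<bar> powr q"
    by (cases "\<bar>x\<bar> \<le> \<bar>y\<bar>") (auto simp: max_def)
  then have "2 powr q * max \<bar>x\<bar> \<bar>y\<bar> powr q \<le> 2 powr q * (\<bar>x\<bar> powr q + \<bar>y\<bar> powr q)"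
    by (intro mult_left_mono) auto
  finally show ?thesis using 1 by linarith
qed

lemma Psi_sq: "p > 1 \<Longrightarrow> (Psi p s)^2 = \<bar>s\<bar> powr (2 * (p - 1))"
proof (cases "s = 0")
  case True then show ?thesis by (simp add: Psi_def)
next
  case False
  have "(Psi p s)^2 = (sgn s)^2 * (\<bar>s\<bar> powr (p - 1) * \<bar>s\<bar> powr (p - 1))"
    unfolding Psi_alt by (simp add: power2_eq_square)
  also have "(sgn s)^2 = 1" using False by (simp add: sgn_if)
  also have "\<bar>s\<bar> powr (p - 1) * \<bar>s\<bar> powr (p - 1) = \<bar>s\<bar> powr ((p - 1) + (p - 1))"
    by (rule powr_add[symmetric])
  also have "(p - 1) + (p - 1) = 2 * (p - 1)" by simp
  finally show ?thesis by simp
qed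

lemma qexp_props: "p > 1 \<Longrightarrow> 0 < 2 * (p - 1) \<and> 2 * (p - 1) \<le> qexp p"
  unfolding qexp_def by auto

lemma CS_weighted:
  fixes P \<phi> :: "nat \<Rightarrow> real"
  assumes "finite J" "\<And>j. j \<in> J \<Longrightarrow> 0 \<le> P j"
  shows "(\<Sum>j\<in>J. P j * \<phi> j)^2 \<le> (\<Sum>j\<in>J. P j) * (\<Sum>j\<in>J. P j * (\<phi> j)^2)"
proof -
  have "\<bar>\<Sum>j\<in>J. P j * \<phi> j\<bar> \<le> (\<Sum>j\<in>J. \<bar>sqrt (P j)\<bar> * \<bar>sqrt (P j) * \<phi> j\<bar>)"
  proof -
    have "\<bar>\<Sum>j\<in>J. P j * \<phi> j\<bar> \<le> (\<Sum>j\<in>J. \<bar>P j * \<phi> j\<bar>)" by (rule sum_abs)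
    also have "\<dots> = (\<Sum>j\<in>J. \<bar>sqrt (P j)\<bar> * \<bar>sqrt (P j) * \<phi> j\<bar>)"
      by (rule sum.cong) (auto simp: assms abs_mult real_sqrt_mult[symmetric] simp flip: mult.assoc)
    finally show ?thesis .
  qed
  also have "\<dots> \<le> L2_set (\<lambda>j. sqrt (P j)) J * L2_set (\<lambda>j. sqrt (P j) * \<phi> j) J"
    by (rule L2_set_mult_ineq)
  finally have a: "\<bar>\<Sum>j\<in>J. P j * \<phi> j\<bar> \<le> L2_set (\<lambda>j. sqrt (P j)) J * L2_set (\<lambda>j. sqrt (P j) * \<phi> j) J" .
  have "(\<Sum>j\<in>J. P j * \<phi> j)^2 = \<bar>\<Sum>j\<in>J. P j * \<phi> j\<bar>^2" by simp
  also have "\<dots> \<le> (L2_set (\<lambda>j. sqrt (P j)) J * L2_set (\<lambda>j. sqrt (P j) * \<phi> j) J)^2"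
    using a by (intro power_mono) auto
  also have "\<dots> = (\<Sum>j\<in>J. P j) * (\<Sum>j\<in>J. P j * (\<phi> j)^2)"
    unfolding power_mult_distrib L2_set_def
    by (simp add: sum_nonneg assms power_mult_distrib)
  finally show ?thesis .
qed

lemma lin_helper: "(\<Sum>i\<in>I. h i * (M * (A i + c * B i))) = M * ((\<Sum>i\<in>I. h i * A i) + c * (\<Sum>i\<in>I. h i * B i))"
  for h A B :: "nat \<Rightarrow> real"
proof -
  have "(\<Sum>i\<in>I. h i * (M * (A i + c * B i))) = (\<Sum>i\<in>I. M * (h i * A i) + (M * c) * (h i * B i))"
    by (rule sum.cong[OF refl]) (simp add: algebra_simps)
  also have "\<dots> = M * (\<Sum>i\<in>I. h i * A i) + (M * c) * (\<Sum>i\<in>I. h i * B i)"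
    by (simp only: sum.distrib sum_distrib_left)
  finally show ?thesis by (simp add: algebra_simps)
qed

lemma lin_helper2: "(\<Sum>i\<in>I. h i * ((1 + c * g i) * M)) = M * ((\<Sum>i\<in>I. h i) + c * (\<Sum>i\<in>I. g i * h i))"
  for h g :: "nat \<Rightarrow> real"
proof -
  have "(\<Sum>i\<in>I. h i * ((1 + c * g i) * M)) = (\<Sum>i\<in>I. M * h i + (M * c) * (g i * h i))"
    by (rule sum.cong[OF refl]) (simp add: algebra_simps)
  also have "\<dots> = M * (\<Sum>i\<in>I. h i) + (M * c) * (\<Sum>i\<in>I. g i * h i)"
    by (simp only: sum.distrib sum_distrib_left)
  finally show ?thesis by (simp add: algebra_simps)
qed

lemma Ag_bound:
  assumes fin: "finite Idx" and p: "p > 1"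
    and K: "\<forall>i\<in>Idx. \<forall>j\<in>Idx. 0 \<le> K i j \<and> K i j = K j i"
    and M: "\<And>i. i \<in> Idx \<Longrightarrow> (\<Sum>j\<in>Idx. hcell cell j * K i j) \<le> M"
    and hsum: "(\<Sum>i\<in>Idx. hcell cell i) = 1"
    and G: "(\<Sum>i\<in>Idx. \<bar>g i\<bar> powr qexp p * hcell cell i) \<le> G"
    and M0: "0 \<le> M"
  shows "(nrm Idx cell (DeltapK p Idx cell K g))^2 \<le> M * (M * (1 + 2 * 2 powr qexp p * G))"
proof -
  let ?h = "hcell cell" and ?q = "qexp p"
  define c where "c = 2 powr ?q"
  define P where "P i j = ?h j * K i j" for i j
  define \<gamma> where "\<gamma> i = \<bar>g i\<bar> powr ?q" for i
  have P0: "i \<in> Idx \<Longrightarrow> j \<in> Idx \<Longrightarrow> 0 \<le> P i j" for i j using K hcell_nonneg[of cell] unfolding P_def by simp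
  have c0: "0 \<le> c" unfolding c_def by simp
  have g0: "0 \<le> \<gamma> i" for i unfolding \<gamma>_def by simp
  have a: "(DeltapK p Idx cell K g i)^2 \<le> M * (\<Sum>j\<in>Idx. P i j * (1 + c * (\<gamma> i + \<gamma> j)))" if i: "i \<in> Idx" for i
  proof -
    have "(DeltapK p Idx cell K g i)^2 = (\<Sum>j\<in>Idx. P i j * Psi p (g j - g i))^2"
      unfolding DeltapK_def P_def by simp
    also have "\<dots> \<le> (\<Sum>j\<in>Idx. P i j) * (\<Sum>j\<in>Idx. P i j * (Psi p (g j - g i))^2)"
      by (rule CS_weighted[OF fin]) (use P0 i in auto)
    also have "\<dots> \<le> M * (\<Sum>j\<in>Idx. P i j * (1 + c * (\<gamma> i + \<gamma> j)))"
    proof (rule mult_mono)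
      show "(\<Sum>j\<in>Idx. P i j) \<le> M" using M[OF i] unfolding P_def by (simp add: mult.commute)
      show "(\<Sum>j\<in>Idx. P i j * (Psi p (g j - g i))^2) \<le> (\<Sum>j\<in>Idx. P i j * (1 + c * (\<gamma> i + \<gamma> j)))"
      proof (rule sum_mono)
        fix j assume j: "j \<in> Idx"
        have "(Psi p (g j - g i))^2 \<le> 1 + c * (\<gamma> i + \<gamma> j)"
          unfolding Psi_sq[OF p] c_def \<gamma>_def using pow_split[of "2 * (p - 1)" ?q "g j" "g i"] qexp_props[OF p]
          by (simp add: add.commute)
        then show "P i j * (Psi p (g j - g i))^2 \<le> P i j * (1 + c * (\<gamma> i + \<gamma> j))"
          using P0 i j by (intro mult_left_mono) auto
      qed
      show "0 \<le> M" by fact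
      show "0 \<le> (\<Sum>j\<in>Idx. P i j * (Psi p (g j - g i))^2)"
        using P0 i by (intro sum_nonneg mult_nonneg_nonneg) auto
    qed
    finally show ?thesis .
  qed
  have sw: "(\<Sum>i\<in>Idx. ?h i * (\<Sum>j\<in>Idx. P i j * \<gamma> j)) \<le> M * (\<Sum>j\<in>Idx. \<gamma> j * ?h j)"
  proof -
    have "(\<Sum>i\<in>Idx. ?h i * (\<Sum>j\<in>Idx. P i j * \<gamma> j)) = (\<Sum>j\<in>Idx. (\<gamma> j * ?h j) * (\<Sum>i\<in>Idx. ?h i * K j i))"
      unfolding P_def sum_distrib_left
      apply (subst sum.swap)
      apply (rule sum.cong[OF refl], rule sum.cong[OF refl])
    proof -
      fix i j assume "i \<in> Idx" "j \<in> Idx"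
      then have e: "K i j = K j i" using K by blast
      show "?h j * (?h i * K j i * \<gamma> i) = \<gamma> i * ?h i * (?h j * K i j)" unfolding e by (simp add: algebra_simps)
    qed
    also have "\<dots> \<le> (\<Sum>j\<in>Idx. (\<gamma> j * ?h j) * M)"
      proof (rule sum_mono)
      fix j assume "j \<in> Idx"
      then have "(\<Sum>i\<in>Idx. ?h i * K j i) \<le> M" using M by (simp add: mult.commute)
      then show "(\<gamma> j * ?h j) * (\<Sum>i\<in>Idx. ?h i * K j i) \<le> (\<gamma> j * ?h j) * M"
        by (rule mult_left_mono) (simp add: g0 hcell_nonneg)
    qed
    also have "\<dots> = M * (\<Sum>j\<in>Idx. \<gamma> j * ?h j)" by (simp add: sum_distrib_left mult.commute)
    finally show ?thesis .
  qed
  have e1: "(\<Sum>j\<in>Idx. P i j * (1 + c * (\<gamma> i + \<gamma> j))) = (1 + c * \<gamma> i) * (\<Sum>j\<in>Idx. P i j) + c * (\<Sum>j\<in>Idx. P i j * \<gamma> j)" for i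
    unfolding sum_distrib_left sum.distrib[symmetric] by (rule sum.cong) (auto simp: algebra_simps)
  have G': "(\<Sum>j\<in>Idx. \<gamma> j * ?h j) \<le> G" using G unfolding \<gamma>_def .
  have "(nrm Idx cell (DeltapK p Idx cell K g))^2 = (\<Sum>i\<in>Idx. ?h i * (DeltapK p Idx cell K g i)^2)"
    by (rule nrm_sq[OF fin])
  also have "\<dots> \<le> (\<Sum>i\<in>Idx. ?h i * (M * (\<Sum>j\<in>Idx. P i j * (1 + c * (\<gamma> i + \<gamma> j)))))"
    using a hcell_nonneg[of cell] by (intro sum_mono mult_left_mono) auto
  also have "\<dots> = (\<Sum>i\<in>Idx. ?h i * (M * ((1 + c * \<gamma> i) * (\<Sum>j\<in>Idx. P i j) + c * (\<Sum>j\<in>Idx. P i j * \<gamma> j))))"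
    by (simp only: e1)
  also have "\<dots> = M * ((\<Sum>i\<in>Idx. ?h i * ((1 + c * \<gamma> i) * (\<Sum>j\<in>Idx. P i j))) + c * (\<Sum>i\<in>Idx. ?h i * (\<Sum>j\<in>Idx. P i j * \<gamma> j)))"
    by (rule lin_helper)
  also have "\<dots> \<le> M * ((\<Sum>i\<in>Idx. ?h i * ((1 + c * \<gamma> i) * M)) + c * (M * (\<Sum>j\<in>Idx. \<gamma> j * ?h j)))"
  proof -
    have s1: "(\<Sum>i\<in>Idx. ?h i * ((1 + c * \<gamma> i) * (\<Sum>j\<in>Idx. P i j))) \<le> (\<Sum>i\<in>Idx. ?h i * ((1 + c * \<gamma> i) * M))"
    proof (rule sum_mono)
      fix i assume i: "i \<in> Idx"
      have "(\<Sum>j\<in>Idx. P i j) \<le> M" using M[OF i] unfolding P_def by (simp add: mult.commute)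
      then have "(1 + c * \<gamma> i) * (\<Sum>j\<in>Idx. P i j) \<le> (1 + c * \<gamma> i) * M"
        using c0 g0[of i] by (intro mult_left_mono) auto
      then show "?h i * ((1 + c * \<gamma> i) * (\<Sum>j\<in>Idx. P i j)) \<le> ?h i * ((1 + c * \<gamma> i) * M)"
        by (rule mult_left_mono[OF _ hcell_nonneg])
    qed
    have s2: "c * (\<Sum>i\<in>Idx. ?h i * (\<Sum>j\<in>Idx. P i j * \<gamma> j)) \<le> c * (M * (\<Sum>j\<in>Idx. \<gamma> j * ?h j))"
      using sw c0 by (rule mult_left_mono)
    show ?thesis by (rule mult_left_mono[OF add_mono[OF s1 s2] M0])
  qed
  also have "\<dots> = M * (M * ((\<Sum>i\<in>Idx. ?h i) + c * (\<Sum>i\<in>Idx. \<gamma> i * ?h i)) + c * (M * (\<Sum>j\<in>Idx. \<gamma> j * ?h j)))"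
    by (simp only: lin_helper2)
  also have "\<dots> = M * (M * ((\<Sum>i\<in>Idx. ?h i) + 2 * c * (\<Sum>j\<in>Idx. \<gamma> j * ?h j)))"
    by (simp add: algebra_simps)
  also have "\<dots> \<le> M * (M * (1 + 2 * c * G))"
    using hsum mult_left_mono[OF G' c0] M0 by (intro mult_left_mono) auto
  finally show ?thesis by (simp only: c_def)
qed
lemma measure_Omega: "measure lebesgue (Omega::(real^'d) set) = 1"
proof -
  have "measure lebesgue (Omega::(real^'d) set) = measure lborel (cbox (0::real^'d) One)"
    unfolding Omega_def by (rule measure_completion) simp
  also have "\<dots> = 1"
  proof -
    have One: "\<And>i. i \<in> Basis \<Longrightarrow> (One::real^'d) \<bullet> i = 1"
      by (simp add: inner_sum_left sum.If_cases inner_Basis)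
    show ?thesis unfolding measure_lborel_cbox_eq using One by simp
  qed
  finally show ?thesis .
qed
lemma is_gridD:
  fixes cell :: "nat \<Rightarrow> (real^'d) set"
  assumes "is_grid Idx cell"
  shows "finite Idx"
    and "\<And>i j. i \<in> Idx \<Longrightarrow> j \<in> Idx \<Longrightarrow> i \<noteq> j \<Longrightarrow> cell i \<inter> cell j = {}"
    and "(\<Union>i\<in>Idx. cell i) = Omega"
    and "\<And>i. i \<in> Idx \<Longrightarrow> \<exists>a s. s > 0 \<and> box a (a + s *\<^sub>R One) \<subseteq> cell i \<and> cell i \<subseteq> cbox a (a + s *\<^sub>R One)"
proof -
  have A: "finite Idx \<and> Idx \<noteq> {} \<and>
     (\<forall>i\<in>Idx. \<forall>j\<in>Idx. i \<noteq> j \<longrightarrow> cell i \<inter> cell j = {}) \<and>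
     (\<Union>i\<in>Idx. cell i) = Omega \<and>
     (\<forall>i\<in>Idx. \<exists>a s. s > 0 \<and> box a (a + s *\<^sub>R One) \<subseteq> cell i \<and>
                        cell i \<subseteq> cbox a (a + s *\<^sub>R One))"
    using assms unfolding is_grid_def by assumption
  then show "finite Idx" by (elim conjE)
  from A show "\<And>i j. i \<in> Idx \<Longrightarrow> j \<in> Idx \<Longrightarrow> i \<noteq> j \<Longrightarrow> cell i \<inter> cell j = {}" by (elim conjE) blast
  from A show "(\<Union>i\<in>Idx. cell i) = Omega" by (elim conjE)
  from A show "\<And>i. i \<in> Idx \<Longrightarrow> \<exists>a s. s > 0 \<and> box a (a + s *\<^sub>R One) \<subseteq> cell i \<and> cell i \<subseteq> cbox a (a + s *\<^sub>R One)"
    by (elim conjE) (drule bspec, assumption)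
qed

lemma cell_meas:
  fixes cell :: "nat \<Rightarrow> (real^'d) set"
  assumes "is_grid Idx cell" "i \<in> Idx"
  shows "cell i \<in> lmeasurable" "cell i \<subseteq> Omega" "cell i \<noteq> {}"
proof -
  obtain a s where as: "s > 0" "box a (a + s *\<^sub>R One) \<subseteq> cell i" "cell i \<subseteq> cbox a (a + s *\<^sub>R One)"
    using is_gridD(4)[OF assms] by blast
  let ?b = "a + s *\<^sub>R (One::real^'d)"
  have e: "cell i = box a ?b \<union> (cell i - box a ?b)" using as by blast
  have "negligible (cell i - box a ?b)"
    by (rule negligible_subset[OF negligible_frontier_interval[of a ?b]]) (use as in blast)
  then have "cell i - box a ?b \<in> sets lebesgue" by (rule negligible_imp_sets)
  moreover have "box a ?b \<in> sets lebesgue" by simp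
  ultimately have "box a ?b \<union> (cell i - box a ?b) \<in> sets lebesgue"
    by (intro sets.Un)
  then have "cell i \<in> sets lebesgue" by (simp only: e[symmetric])
  then show "cell i \<in> lmeasurable"
    by (rule bounded_set_imp_lmeasurable[OF bounded_subset[OF bounded_cbox as(3)]])
  show "cell i \<subseteq> Omega" using is_gridD(3)[OF assms(1)] assms(2) by blast
  have One: "\<And>i. i \<in> Basis \<Longrightarrow> (One::real^'d) \<bullet> i = 1"
    by (simp add: inner_sum_left sum.If_cases inner_Basis)
  have "a + (s / 2) *\<^sub>R One \<in> box a ?b"
    unfolding mem_box using One as(1) by (simp add: inner_add_left)
  then have "box a ?b \<noteq> {}" by blast
  then show "cell i \<noteq> {}" using as by blast
qed

lemma injn_cell:
  assumes "is_grid Idx cell" "i \<in> Idx" "x \<in> cell i"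
  shows "injn Idx cell v x = v i"
proof -
  have fin: "finite Idx" using is_gridD(1)[OF assms(1)] .
  have dis: "\<And>j. j \<in> Idx \<Longrightarrow> j \<noteq> i \<Longrightarrow> x \<notin> cell j"
    using is_gridD(2)[OF assms(1)] assms(2,3) by blast
  have "injn Idx cell v x = v i * indicator (cell i) x + (\<Sum>j\<in>Idx - {i}. v j * indicator (cell j) x)"
    unfolding injn_def by (rule sum.remove[OF fin assms(2)])
  also have "(\<Sum>j\<in>Idx - {i}. v j * indicator (cell j) x) = 0"
    by (rule sum.neutral) (use dis in auto)
  finally show ?thesis using assms(3) by simp
qed

lemma exists_cell:
  assumes "is_grid Idx cell" "x \<in> Omega"
  shows "\<exists>i\<in>Idx. x \<in> cell i"
  using is_gridD(3)[OF assms(1)] assms(2) by blast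

lemma sum_ind_cell:
  assumes "is_grid Idx cell" "i \<in> Idx" "x \<in> cell i"
  shows "(\<Sum>j\<in>Idx. c j * indicator (cell j) x) = (c i::real)"
  using injn_cell[OF assms, of c] unfolding injn_def .

lemma int_injn:
  assumes g: "is_grid Idx cell"
  shows "(LINT x:Omega|lebesgue. \<phi> (injn Idx cell v x)) = (\<Sum>i\<in>Idx. \<phi> (v i) * hcell cell i)"
proof -
  have fin: "finite Idx" using is_gridD(1)[OF g] .
  have pt: "indicator Omega x *\<^sub>R \<phi> (injn Idx cell v x) = (\<Sum>i\<in>Idx. \<phi> (v i) * indicator (cell i) x)" for x
  proof (cases "x \<in> Omega")
    case True
    then obtain i where i: "i \<in> Idx" "x \<in> cell i" using exists_cell[OF g] by blast
    show ?thesis using True injn_cell[OF g i] sum_ind_cell[OF g i] by simp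
  next
    case False
    then have "\<And>i. i \<in> Idx \<Longrightarrow> x \<notin> cell i" using cell_meas(2)[OF g] by blast
    then show ?thesis using False by simp
  qed
  have "(LINT x:Omega|lebesgue. \<phi> (injn Idx cell v x)) = (LINT x|lebesgue. (\<Sum>i\<in>Idx. \<phi> (v i) * indicator (cell i) x))"
    unfolding set_lebesgue_integral_def pt ..
  also have "\<dots> = (\<Sum>i\<in>Idx. LINT x|lebesgue. \<phi> (v i) * indicator (cell i) x)"
  proof -
    have int: "integrable lebesgue (\<lambda>x. \<phi> (v i) * indicator (cell i) x :: real)" if "i \<in> Idx" for i
    proof (rule integrable_mult_right)
      show "integrable lebesgue (indicator (cell i) :: _ \<Rightarrow> real)"
        using cell_meas(1)[OF g that] by (simp add: lmeasurable_iff_integrable)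
    qed
    show ?thesis using int by simp
  qed
  also have "\<dots> = (\<Sum>i\<in>Idx. \<phi> (v i) * hcell cell i)"
    by (rule sum.cong) (auto simp: hcell_def)
  finally show ?thesis .
qed

lemma injn_diff: "injn Idx cell a x - injn Idx cell b x = injn Idx cell (\<lambda>i. a i - b i) x"
  unfolding injn_def by (simp add: sum_subtractf left_diff_distrib)

lemma injn_scale: "c * injn Idx cell a x = injn Idx cell (\<lambda>i. c * a i) x"
  unfolding injn_def by (simp add: sum_distrib_left mult.assoc)

lemma Lnorm_injn:
  assumes "is_grid Idx cell"
  shows "Lnorm r (injn Idx cell v) = (\<Sum>i\<in>Idx. \<bar>v i\<bar> powr r * hcell cell i) powr (1 / r)"
  unfolding Lnorm_def using int_injn[OF assms, of "\<lambda>y. \<bar>y\<bar> powr r" v] by simp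

lemma abs_powr2: "\<bar>x::real\<bar> powr 2 = x^2"
proof (cases "x = 0")
  case False
  then have "\<bar>x\<bar> powr (real 2) = \<bar>x\<bar> ^ 2" by (intro powr_realpow) simp
  then show ?thesis by simp
qed simp

lemma Lnorm2_injn:
  assumes g: "is_grid Idx cell"
  shows "Lnorm 2 (injn Idx cell v) = nrm Idx cell v"
proof -
  have fin: "finite Idx" using is_gridD(1)[OF g] .
  have "Lnorm 2 (injn Idx cell v) = (\<Sum>i\<in>Idx. hcell cell i * (v i)^2) powr (1 / 2)"
    unfolding Lnorm_injn[OF g] abs_powr2 by (simp add: mult.commute)
  also have "\<dots> = sqrt (\<Sum>i\<in>Idx. hcell cell i * (v i)^2)"
    by (rule powr_half_sqrt) (simp add: sum_nonneg hcell_nonneg)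
  also have "\<dots> = sqrt ((nrm Idx cell v)^2)" by (simp add: nrm_sq[OF fin])
  also have "\<dots> = nrm Idx cell v" by (simp add: nrm_nonneg)
  finally show ?thesis .
qed

lemma hsum:
  fixes cell :: "nat \<Rightarrow> (real^'d) set"
  assumes g: "is_grid Idx cell"
  shows "(\<Sum>i\<in>Idx. hcell cell i) = 1"
proof -
  have "(LINT x:Omega|lebesgue. (\<lambda>_. 1::real) (injn Idx cell (\<lambda>_. 0) x)) = (\<Sum>i\<in>Idx. 1 * hcell cell i)"
    by (rule int_injn[OF g])
  moreover have "(LINT x:Omega|lebesgue. (\<lambda>_. 1::real) (injn Idx cell (\<lambda>_. 0) x)) = measure lebesgue (Omega :: (real^'d) set)"
    unfolding set_lebesgue_integral_def by simp
  ultimately have "(\<Sum>i\<in>Idx. hcell cell i) = measure lebesgue (Omega :: (real^'d) set)" by simp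
  then show ?thesis using measure_Omega by simp
qed

lemma injK_cell:
  assumes g: "is_grid Idx cell" and i: "i \<in> Idx" "x \<in> cell i"
  shows "injK Idx cell K x y = injn Idx cell (K i) y"
proof -
  have "injK Idx cell K x y = (\<Sum>i'\<in>Idx. (\<Sum>j\<in>Idx. K i' j * indicator (cell j) y) * indicator (cell i') x)"
    unfolding injK_def sum_distrib_right by (rule sum.cong[OF refl], rule sum.cong[OF refl]) (simp add: algebra_simps)
  also have "\<dots> = (\<Sum>j\<in>Idx. K i j * indicator (cell j) y)"
    by (rule sum_ind_cell[OF g i])
  finally show ?thesis unfolding injn_def .
qed

lemma Linf1_bound:
  assumes g: "is_grid Idx cell" and i: "i \<in> Idx"
    and K: "\<forall>i\<in>Idx. \<forall>j\<in>Idx. 0 \<le> K i j \<and> K i j = K j i"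
    and L: "Linf1 (injK Idx cell K) \<le> MK"
  shows "(\<Sum>j\<in>Idx. hcell cell j * K i j) \<le> MK"
proof -
  define G where "G x = (LINT y:Omega|lebesgue. \<bar>injK Idx cell K x y\<bar>)" for x
  define H where "H i' = (\<Sum>j\<in>Idx. \<bar>K i' j\<bar> * hcell cell j)" for i'
  have GH: "G x = H i'" if "i' \<in> Idx" "x \<in> cell i'" for x i'
    unfolding G_def H_def injK_cell[OF g that] using int_injn[OF g, of abs "K i'"] by simp
  have fin: "finite Idx" using is_gridD(1)[OF g] .
  have "G ` Omega \<subseteq> H ` Idx"
  proof
    fix z assume "z \<in> G ` Omega"
    then obtain x where x: "x \<in> Omega" "z = G x" by blast
    then obtain i' where "i' \<in> Idx" "x \<in> cell i'" using exists_cell[OF g] by blast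
    then show "z \<in> H ` Idx" using GH x by blast
  qed
  then have bdd: "bdd_above (G ` Omega)" using fin by (meson bdd_above_finite finite_imageI finite_subset)
  obtain x where x: "x \<in> cell i" using cell_meas(3)[OF g i] by blast
  then have xO: "x \<in> Omega" using cell_meas(2)[OF g i] by blast
  have "H i = G x" using GH[OF i x] by simp
  also have "\<dots> \<le> (SUP x\<in>Omega. G x)" by (rule cSUP_upper[OF xO bdd])
  also have "\<dots> = Linf1 (injK Idx cell K)" unfolding Linf1_def G_def ..
  finally have "H i \<le> MK" using L by linarith
  moreover have "H i = (\<Sum>j\<in>Idx. hcell cell j * K i j)"
    unfolding H_def by (rule sum.cong[OF refl]) (use K i in auto)
  ultimately show ?thesis by simp
qed


lemma tp_strict:
  assumes tp: "time_partition N t" and "j \<le> N"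
  shows "i < j \<Longrightarrow> t i < t j"
  using assms(2)
proof (induction j)
  case 0 then show ?case by simp
next
  case (Suc j)
  have step: "t j < t (Suc j)" using tp Suc.prems(2) unfolding time_partition_def by simp
  show ?case
  proof (cases "i = j")
    case True then show ?thesis using step by simp
  next
    case False
    then have "t i < t j" using Suc by simp
    then show ?thesis using step by simp
  qed
qed

lemma kidx_basic:
  assumes tp: "time_partition N t" and s: "s \<le> t N"
  shows "1 \<le> kidx t s" "kidx t s \<le> N" "s \<le> t (kidx t s)"
proof -
  have N1: "1 \<le> N" using tp unfolding time_partition_def by simp
  have P: "1 \<le> kidx t s \<and> s \<le> t (kidx t s)"
    unfolding kidx_def by (rule LeastI[of _ N]) (use N1 s in simp)
  then show "1 \<le> kidx t s" "s \<le> t (kidx t s)" by simp_all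
  show "kidx t s \<le> N" unfolding kidx_def by (rule Least_le) (use N1 s in simp)
qed

lemma kidx_lower:
  assumes tp: "time_partition N t" and s: "0 \<le> s" "s \<le> t N"
  shows "t (kidx t s - 1) \<le> s"
proof (cases "kidx t s = 1")
  case True then show ?thesis using tp s unfolding time_partition_def by simp
next
  case False
  then have k2: "kidx t s - 1 < kidx t s" "1 \<le> kidx t s - 1" using kidx_basic(1)[OF tp s(2)] by auto
  have "\<not> (1 \<le> kidx t s - 1 \<and> s \<le> t (kidx t s - 1))"
    using not_less_Least[OF k2(1)[unfolded kidx_def]] unfolding kidx_def .
  then show ?thesis using k2 by simp
qed

lemma kidx_at:
  assumes tp: "time_partition N t" and i: "1 \<le> i" "i \<le> N"
  shows "kidx t (t i) = i"
  unfolding kidx_def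
proof (rule Least_equality)
  show "1 \<le> i \<and> t i \<le> t i" using i by simp
  fix k assume k: "1 \<le> k \<and> t i \<le> t k"
  show "i \<le> k"
  proof (rule ccontr)
    assume "\<not> i \<le> k"
    then have "t k < t i" using tp_strict[OF tp i(2)] by simp
    then show False using k by simp
  qed
qed

lemma kidx_zero:
  assumes tp: "time_partition N t"
  shows "kidx t 0 = 1"
  unfolding kidx_def
proof (rule Least_equality)
  have N1: "0 < N" and t0: "t 0 = 0" and st: "\<forall>k<N. t k < t (Suc k)" using tp unfolding time_partition_def by auto
  have "t 0 < t 1" using st N1 by simp
  then show "1 \<le> (1::nat) \<and> 0 \<le> t 1" using t0 by simp
qed simp

lemma kidx_mono:
  assumes tp: "time_partition N t" and "s \<le> s'" "s' \<le> t N"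
  shows "kidx t s \<le> kidx t s'"
proof -
  have "1 \<le> kidx t s' \<and> s \<le> t (kidx t s')"
    using kidx_basic[OF tp assms(3)] assms(2) by simp
  then show ?thesis unfolding kidx_def[of t s] by (rule Least_le)
qed

definition Jsum :: "nat set \<Rightarrow> (nat \<Rightarrow> (real^'d) set) \<Rightarrow> (nat \<Rightarrow> nat \<Rightarrow> real) \<Rightarrow> nat \<Rightarrow> real" where
  "Jsum Idx cell f m = (\<Sum>j\<in>{2..m}. nrm Idx cell (\<lambda>i. f j i - f (j - 1) i))"

lemma Jsum_nonneg: "0 \<le> Jsum Idx cell f m"
  unfolding Jsum_def by (intro sum_nonneg) (simp add: nrm_nonneg)

lemma Jsum_mono: "m \<le> m' \<Longrightarrow> Jsum Idx cell f m \<le> Jsum Idx cell f m'"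
  unfolding Jsum_def by (intro sum_mono2) (auto simp: nrm_nonneg)

lemma Jsum_Suc: "1 \<le> m \<Longrightarrow> Jsum Idx cell f (Suc m) = Jsum Idx cell f m + nrm Idx cell (\<lambda>i. f (Suc m) i - f m i)"
proof -
  assume m: "1 \<le> m"
  have "{2..Suc m} = insert (Suc m) {2..m}" using m by auto
  then show ?thesis unfolding Jsum_def by simp
qed

lemma Jsum_one: "Jsum Idx cell f 1 = 0" unfolding Jsum_def by simp

lemma nrm_zero: "nrm Idx cell (\<lambda>i. 0) = 0" unfolding nrm_def L2_set_def by simp

lemma Jsum_diff:
  assumes "1 \<le> b" "b \<le> a"
  shows "nrm Idx cell (\<lambda>i. f a i - f b i) \<le> Jsum Idx cell f a - Jsum Idx cell f b"
  using assms(2)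
proof (induction a rule: dec_induct)
  case base then show ?case by (simp add: nrm_zero)
next
  case (step n)
  have "nrm Idx cell (\<lambda>i. f (Suc n) i - f b i) = nrm Idx cell (\<lambda>i. (f (Suc n) i - f n i) + (f n i - f b i))"
    by simp
  also have "\<dots> \<le> nrm Idx cell (\<lambda>i. f (Suc n) i - f n i) + nrm Idx cell (\<lambda>i. f n i - f b i)"
    by (rule nrm_triangle)
  also have "\<dots> \<le> nrm Idx cell (\<lambda>i. f (Suc n) i - f n i) + (Jsum Idx cell f n - Jsum Idx cell f b)"
    using step.IH by simp
  also have "\<dots> = Jsum Idx cell f (Suc n) - Jsum Idx cell f b"
    using Jsum_Suc[of n Idx cell f] step.hyps assms(1) by simp
  finally show ?case .
qed


lemma barU_injn: "barU t (\<lambda>k. injn Idx cell (f k)) s = injn Idx cell (f (kidx t s))"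
  unfolding barU_def by (rule ext) simp

lemma Lnorm2_barU_diff:
  assumes g: "is_grid Idx cell"
  shows "Lnorm 2 (\<lambda>x. barU t (\<lambda>k. injn Idx cell (f k)) a x - barU t (\<lambda>k. injn Idx cell (f k)) b x)
       = nrm Idx cell (\<lambda>i. f (kidx t a) i - f (kidx t b) i)"
  unfolding barU_def injn_diff using Lnorm2_injn[OF g] by simp

lemma partition_sum_bound:
  assumes g: "is_grid Idx cell" and tp: "time_partition N t"
  shows "(\<forall>i<M. s i < s (Suc i)) \<Longrightarrow> s M \<le> t N \<Longrightarrow>
    (\<Sum>i\<in>{1..M}. Lnorm 2 (\<lambda>x. barU t (\<lambda>k. injn Idx cell (f k)) (s i) x - barU t (\<lambda>k. injn Idx cell (f k)) (s (i - 1)) x))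
      \<le> Jsum Idx cell f (kidx t (s M)) - Jsum Idx cell f (kidx t (s 0))"
proof (induction M)
  case 0 then show ?case by simp
next
  case (Suc M)
  have lt: "s M < s (Suc M)" using Suc.prems(1) by simp
  have sM: "s M \<le> t N" using lt Suc.prems(2) by simp
  have IH: "(\<Sum>i\<in>{1..M}. Lnorm 2 (\<lambda>x. barU t (\<lambda>k. injn Idx cell (f k)) (s i) x - barU t (\<lambda>k. injn Idx cell (f k)) (s (i - 1)) x))
      \<le> Jsum Idx cell f (kidx t (s M)) - Jsum Idx cell f (kidx t (s 0))"
    using Suc.IH Suc.prems(1) sM by simp
  have "Lnorm 2 (\<lambda>x. barU t (\<lambda>k. injn Idx cell (f k)) (s (Suc M)) x - barU t (\<lambda>k. injn Idx cell (f k)) (s (Suc M - 1)) x)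
      = nrm Idx cell (\<lambda>i. f (kidx t (s (Suc M))) i - f (kidx t (s M)) i)"
    unfolding Lnorm2_barU_diff[OF g] by simp
  also have "\<dots> \<le> Jsum Idx cell f (kidx t (s (Suc M))) - Jsum Idx cell f (kidx t (s M))"
    by (rule Jsum_diff[OF kidx_basic(1)[OF tp sM] kidx_mono[OF tp less_imp_le[OF lt] Suc.prems(2)]])
  finally have last: "Lnorm 2 (\<lambda>x. barU t (\<lambda>k. injn Idx cell (f k)) (s (Suc M)) x - barU t (\<lambda>k. injn Idx cell (f k)) (s (Suc M - 1)) x)
      \<le> Jsum Idx cell f (kidx t (s (Suc M))) - Jsum Idx cell f (kidx t (s M))" .
  have "(\<Sum>i\<in>{1..Suc M}. Lnorm 2 (\<lambda>x. barU t (\<lambda>k. injn Idx cell (f k)) (s i) x - barU t (\<lambda>k. injn Idx cell (f k)) (s (i - 1)) x))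
     = (\<Sum>i\<in>{1..M}. Lnorm 2 (\<lambda>x. barU t (\<lambda>k. injn Idx cell (f k)) (s i) x - barU t (\<lambda>k. injn Idx cell (f k)) (s (i - 1)) x))
       + Lnorm 2 (\<lambda>x. barU t (\<lambda>k. injn Idx cell (f k)) (s (Suc M)) x - barU t (\<lambda>k. injn Idx cell (f k)) (s (Suc M - 1)) x)"
    by (simp add: sum.cl_ivl_Suc)
  then show ?case using IH last by linarith
qed

lemma Var2_ge:
  assumes g: "is_grid Idx cell" and tp: "time_partition N t"
  shows "Jsum Idx cell f N \<le> Var2 (t N) (barU t (\<lambda>k. injn Idx cell (f k)))"
proof -
  let ?F = "barU t (\<lambda>k. injn Idx cell (f k))"
  let ?L = "\<lambda>s i. Lnorm 2 (\<lambda>x. ?F (s i) x - ?F (s (i - 1)) x)"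
  define S where "S = {(\<Sum>i\<in>{1..M}. ?L s i) | s M.
                    0 \<le> s 0 \<and> (\<forall>i<M. s i < s (Suc i)) \<and> s M \<le> t N}"
  have N1: "1 \<le> N" and t0: "t 0 = 0" and st: "\<forall>k<N. t k < t (Suc k)" using tp unfolding time_partition_def by auto
  have bdd: "bdd_above S"
  proof (rule bdd_aboveI)
    fix z assume "z \<in> S"
    then obtain s M where z: "z = (\<Sum>i\<in>{1..M}. ?L s i)" and c: "0 \<le> s 0" "\<forall>i<M. s i < s (Suc i)" "s M \<le> t N"
      unfolding S_def by blast
    have "z \<le> Jsum Idx cell f (kidx t (s M)) - Jsum Idx cell f (kidx t (s 0))"
      unfolding z by (rule partition_sum_bound[OF g tp c(2,3)])
    also have "\<dots> \<le> Jsum Idx cell f N"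
      using Jsum_mono[OF kidx_basic(2)[OF tp c(3)], of Idx cell f] Jsum_nonneg[of Idx cell f "kidx t (s 0)"] by linarith
    finally show "z \<le> Jsum Idx cell f N" .
  qed
  have mem: "(\<Sum>i\<in>{1..N}. ?L t i) \<in> S"
    unfolding S_def
  proof (intro CollectI exI conjI)
    show "(\<Sum>i\<in>{1..N}. ?L t i) = (\<Sum>i\<in>{1..N}. ?L t i)" ..
    show "0 \<le> t 0" using t0 by simp
    show "\<forall>i<N. t i < t (Suc i)" by (rule st)
    show "t N \<le> t N" by simp
  qed
  have "(\<Sum>i\<in>{1..N}. ?L t i) = ?L t 1 + (\<Sum>i\<in>{2..N}. ?L t i)"
    using N1 by (simp add: sum.atLeast_Suc_atMost numeral_2_eq_2)
  also have "?L t 1 = 0"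
    unfolding Lnorm2_barU_diff[OF g] using kidx_at[OF tp, of 1] N1 kidx_zero[OF tp] t0 by (simp add: nrm_zero)
  also have "(\<Sum>i\<in>{2..N}. ?L t i) = Jsum Idx cell f N"
    unfolding Jsum_def
  proof (rule sum.cong[OF refl])
    fix i assume i: "i \<in> {2..N}"
    then have "kidx t (t i) = i" "kidx t (t (i - 1)) = i - 1" using kidx_at[OF tp] by auto
    then show "?L t i = nrm Idx cell (\<lambda>ia. f i ia - f (i - 1) ia)"
      unfolding Lnorm2_barU_diff[OF g] by simp
  qed
  finally have "Jsum Idx cell f N = (\<Sum>i\<in>{1..N}. ?L t i)" by simp
  also have "\<dots> \<le> Sup S" by (rule cSup_upper[OF mem bdd])
  also have "\<dots> = Var2 (t N) ?F" unfolding S_def Var2_def ..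
  finally show ?thesis .
qed

lemma BV_bound:
  assumes g: "is_grid Idx cell" and tp: "time_partition N t"
  shows "nrm Idx cell (f 1) + Jsum Idx cell f N \<le> BVnorm (t N) (barU t (\<lambda>k. injn Idx cell (f k)))"
proof -
  have "Lnorm 2 (barU t (\<lambda>k. injn Idx cell (f k)) 0) = nrm Idx cell (f 1)"
    unfolding barU_injn kidx_zero[OF tp] Lnorm2_injn[OF g] ..
  then show ?thesis unfolding BVnorm_def using Var2_ge[OF g tp, of f] by simp
qed


lemma scheme_step:
  assumes sch: "scheme p Idx cell K g N t f u" and tp: "time_partition N t"
    and k: "1 \<le> k" "k \<le> N" and i: "i \<in> Idx"
  shows "u k i + (t k - t (k - 1)) * DeltapK p Idx cell K (u k) i = u (k - 1) i + (t k - t (k - 1)) * f k i"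
proof -
  have pos: "t (k - 1) < t k" using tp_strict[OF tp k(2)] k(1) by simp
  have e: "(u k i - u (k - 1) i) / (t k - t (k - 1)) = - DeltapK p Idx cell K (u k) i + f k i"
    using sch k i unfolding scheme_def by auto
  have "u k i - u (k - 1) i = (t k - t (k - 1)) * (- DeltapK p Idx cell K (u k) i + f k i)"
    using e pos by (simp add: divide_eq_eq mult.commute)
  then show ?thesis by (simp add: algebra_simps)
qed

lemma step_bound:
  assumes g: "is_grid Idx cell" and p: "p > 1"
    and K: "\<forall>i\<in>Idx. \<forall>j\<in>Idx. 0 \<le> K i j \<and> K i j = K j i"
    and tp: "time_partition N t" and sch: "scheme p Idx cell K g N t f u"
    and k: "1 \<le> k"
  shows "k \<le> N \<Longrightarrow> nrm Idx cell (\<lambda>i. u k i - u (k - 1) i)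
     \<le> (t k - t (k - 1)) * (nrm Idx cell (f 1) + nrm Idx cell (DeltapK p Idx cell K g) + Jsum Idx cell f k)"
  using k
proof (induction k rule: nat_induct_at_least)
  let ?A = "DeltapK p Idx cell K"
  have fin: "finite Idx" by (rule is_gridD(1)[OF g])
  case base
  define \<tau> where "\<tau> = t 1 - t 0"
  have tau: "\<tau> > 0" unfolding \<tau>_def using tp_strict[OF tp base, of 0] by simp
  have c: "nrm Idx cell (\<lambda>i. u 1 i - u 0 i) \<le> nrm Idx cell (\<lambda>i. (u 0 i + \<tau> * f 1 i) - (u 0 i + \<tau> * ?A (u 0) i))"
    by (rule contraction[OF fin p K tau]) (use scheme_step[OF sch tp le_refl base] \<tau>_def in simp_all)
  have "nrm Idx cell (\<lambda>i. (u 0 i + \<tau> * f 1 i) - (u 0 i + \<tau> * ?A (u 0) i)) = nrm Idx cell (\<lambda>i. \<tau> * (f 1 i + (-1) * ?A (u 0) i))"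
    by (simp add: algebra_simps)
  also have "\<dots> = \<tau> * nrm Idx cell (\<lambda>i. f 1 i + (-1) * ?A (u 0) i)"
    using tau by (simp add: nrm_scale)
  also have "\<dots> \<le> \<tau> * (nrm Idx cell (f 1) + nrm Idx cell (\<lambda>i. (-1) * ?A (u 0) i))"
    using nrm_triangle[of Idx cell "f 1" "\<lambda>i. (-1) * ?A (u 0) i"] tau by (intro mult_left_mono) auto
  also have "nrm Idx cell (\<lambda>i. (-1) * ?A (u 0) i) = nrm Idx cell (?A (u 0))"
    by (simp only: nrm_abs_scale abs_neg_one mult_1)
  also have "nrm Idx cell (?A (u 0)) = nrm Idx cell (?A g)"
  proof (rule nrm_cong)
    fix i assume i: "i \<in> Idx"
    have "\<forall>j\<in>Idx. u 0 j = g j" using sch unfolding scheme_def by simp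
    then show "?A (u 0) i = ?A g i" using i unfolding DeltapK_def by simp
  qed
  finally have X: "nrm Idx cell (\<lambda>i. (u 0 i + \<tau> * f 1 i) - (u 0 i + \<tau> * ?A (u 0) i)) \<le> \<tau> * (nrm Idx cell (f 1) + nrm Idx cell (?A g))" .
  have "nrm Idx cell (\<lambda>i. u 1 i - u (1 - 1) i) \<le> \<tau> * (nrm Idx cell (f 1) + nrm Idx cell (?A g) + Jsum Idx cell f 1)"
    using order_trans[OF c X] Jsum_one[of Idx cell f] by simp
  then show ?case unfolding \<tau>_def by simp
next
  let ?A = "DeltapK p Idx cell K"
  have fin: "finite Idx" by (rule is_gridD(1)[OF g])
  case (Suc n)
  let ?B = "\<lambda>m. nrm Idx cell (f 1) + nrm Idx cell (?A g) + Jsum Idx cell f m"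
  have n1: "1 \<le> n" "n \<le> N" using Suc by auto
  define \<tau> where "\<tau> = t (Suc n) - t n"
  define \<sigma> where "\<sigma> = t n - t (n - 1)"
  have tau: "\<tau> > 0" unfolding \<tau>_def using tp_strict[OF tp Suc.prems, of n] by simp
  have sig: "\<sigma> > 0" unfolding \<sigma>_def using tp_strict[OF tp n1(2), of "n - 1"] n1 by simp
  have IH: "nrm Idx cell (\<lambda>i. u n i - u (n - 1) i) \<le> \<sigma> * ?B n" using Suc.IH n1 unfolding \<sigma>_def by simp
  define v where "v i = (u n i - u (n - 1) i) / \<sigma>" for i
  have Av: "?A (u n) i = f n i - v i" if "i \<in> Idx" for i
  proof -
    have "u n i + \<sigma> * ?A (u n) i = u (n - 1) i + \<sigma> * f n i"
      using scheme_step[OF sch tp n1 that] unfolding \<sigma>_def .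
    moreover have "\<sigma> * v i = u n i - u (n - 1) i" unfolding v_def using sig by simp
    ultimately have "\<sigma> * ?A (u n) i = \<sigma> * f n i - \<sigma> * v i" by linarith
    then have "\<sigma> * ?A (u n) i = \<sigma> * (f n i - v i)" by (simp add: right_diff_distrib)
    then show ?thesis using sig by simp
  qed
  have c: "nrm Idx cell (\<lambda>i. u (Suc n) i - u n i) \<le> nrm Idx cell (\<lambda>i. (u n i + \<tau> * f (Suc n) i) - (u n i + \<tau> * ?A (u n) i))"
    by (rule contraction[OF fin p K tau]) (use scheme_step[OF sch tp _ Suc.prems] \<tau>_def in simp_all)
  have "nrm Idx cell (\<lambda>i. (u n i + \<tau> * f (Suc n) i) - (u n i + \<tau> * ?A (u n) i))
      = nrm Idx cell (\<lambda>i. \<tau> * ((f (Suc n) i - f n i) + v i))"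
    by (rule nrm_cong) (simp add: Av algebra_simps)
  also have "\<dots> = \<tau> * nrm Idx cell (\<lambda>i. (f (Suc n) i - f n i) + v i)"
    using tau by (simp add: nrm_scale)
  also have "\<dots> \<le> \<tau> * (nrm Idx cell (\<lambda>i. f (Suc n) i - f n i) + nrm Idx cell v)"
    using nrm_triangle[of Idx cell "\<lambda>i. f (Suc n) i - f n i" v] tau by (intro mult_left_mono) auto
  also have "nrm Idx cell v = (1 / \<sigma>) * nrm Idx cell (\<lambda>i. u n i - u (n - 1) i)"
  proof -
    have "nrm Idx cell v = nrm Idx cell (\<lambda>i. (1 / \<sigma>) * (u n i - u (n - 1) i))"
      unfolding v_def by simp
    also have "\<dots> = (1 / \<sigma>) * nrm Idx cell (\<lambda>i. u n i - u (n - 1) i)"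
      using sig by (intro nrm_scale) simp
    finally show ?thesis .
  qed
  also have "(1 / \<sigma>) * nrm Idx cell (\<lambda>i. u n i - u (n - 1) i) \<le> ?B n"
    using IH sig by (simp add: divide_le_eq mult.commute)
  then have "\<tau> * (nrm Idx cell (\<lambda>i. f (Suc n) i - f n i) + (1 / \<sigma>) * nrm Idx cell (\<lambda>i. u n i - u (n - 1) i))
      \<le> \<tau> * (nrm Idx cell (\<lambda>i. f (Suc n) i - f n i) + ?B n)"
    using tau by (intro mult_left_mono) auto
  also have "nrm Idx cell (\<lambda>i. f (Suc n) i - f n i) + ?B n = ?B (Suc n)"
    using Jsum_Suc[OF n1(1), of Idx cell f] by simp
  finally have X: "nrm Idx cell (\<lambda>i. (u n i + \<tau> * f (Suc n) i) - (u n i + \<tau> * ?A (u n) i)) \<le> \<tau> * ?B (Suc n)" .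
  have "nrm Idx cell (\<lambda>i. u (Suc n) i - u (Suc n - 1) i) \<le> \<tau> * ?B (Suc n)"
    using order_trans[OF c X] by simp
  then show ?case unfolding \<tau>_def by simp
qed


theorem lemma6p14:
  fixes p MK Mg Mf Mb :: real
  assumes "p > 1"
  shows "\<exists>C>0. \<forall>(Idx::nat set) (cell::nat \<Rightarrow> (real^'d) set) K g N t f u.
     is_grid Idx cell
     \<and> (\<forall>i\<in>Idx. \<forall>j\<in>Idx. 0 \<le> K i j \<and> K i j = K j i)
     \<and> Linf1 (injK Idx cell K) \<le> MK
     \<and> Lnorm (qexp p) (injn Idx cell g) \<le> Mg
     \<and> time_partition N t
     \<and> L1Lnorm (t N) (qexp p) (barU t (\<lambda>k. injn Idx cell (f k))) \<le> Mf
     \<and> BVnorm (t N) (barU t (\<lambda>k. injn Idx cell (f k))) \<le> Mb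
     \<and> scheme p Idx cell K g N t f u
     \<longrightarrow> (\<forall>s\<in>{0..t N}.
           Lnorm 2 (\<lambda>x. tildeU t (\<lambda>k. injn Idx cell (u k)) s x
                       - barU t (\<lambda>k. injn Idx cell (u k)) s x) \<le> C * taumax N t)"
proof -
  have p: "p > 1" by fact
  define q where "q = qexp p"
  have q0: "0 < q" using qexp_props[OF p] unfolding q_def by linarith
  define M where "M = \<bar>MK\<bar>"
  define G where "G = \<bar>Mg\<bar> powr q"
  define D where "D = M * (M * (1 + 2 * 2 powr qexp p * G))"
  define C where "C = \<bar>Mb\<bar> + sqrt D + 1"
  have M0: "0 \<le> M" unfolding M_def by simp
  have G0: "0 \<le> G" unfolding G_def by simp
  have D0: "0 \<le> D" unfolding D_def using M0 G0 by simp
  have C0: "C > 0" unfolding C_def using real_sqrt_ge_zero[OF D0] abs_ge_zero[of Mb] by linarith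
  show ?thesis
  proof (rule exI[of _ C], intro conjI C0 allI impI)
    fix Idx :: "nat set" and cell :: "nat \<Rightarrow> (real^'d) set" and K g N t f u
    assume H: "is_grid Idx cell
     \<and> (\<forall>i\<in>Idx. \<forall>j\<in>Idx. 0 \<le> K i j \<and> K i j = K j i)
     \<and> Linf1 (injK Idx cell K) \<le> MK
     \<and> Lnorm (qexp p) (injn Idx cell g) \<le> Mg
     \<and> time_partition N t
     \<and> L1Lnorm (t N) (qexp p) (barU t (\<lambda>k. injn Idx cell (f k))) \<le> Mf
     \<and> BVnorm (t N) (barU t (\<lambda>k. injn Idx cell (f k))) \<le> Mb
     \<and> scheme p Idx cell K g N t f u"
    have g: "is_grid Idx cell" using H by blast
    have K: "\<forall>i\<in>Idx. \<forall>j\<in>Idx. 0 \<le> K i j \<and> K i j = K j i" using H by blast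
    have L: "Linf1 (injK Idx cell K) \<le> MK" using H by blast
    have Lg: "Lnorm (qexp p) (injn Idx cell g) \<le> Mg" using H by blast
    have tp: "time_partition N t" using H by blast
    have BV: "BVnorm (t N) (barU t (\<lambda>k. injn Idx cell (f k))) \<le> Mb" using H by blast
    have sch: "scheme p Idx cell K g N t f u" using H by blast
    have fin: "finite Idx" by (rule is_gridD(1)[OF g])
    let ?A = "DeltapK p Idx cell K"
    have Mi: "(\<Sum>j\<in>Idx. hcell cell j * K i j) \<le> M" if "i \<in> Idx" for i
      using Linf1_bound[OF g that K L] unfolding M_def by linarith
    define S where "S = (\<Sum>i\<in>Idx. \<bar>g i\<bar> powr q * hcell cell i)"
    have S0: "0 \<le> S" unfolding S_def by (intro sum_nonneg mult_nonneg_nonneg) (simp_all add: hcell_nonneg)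
    have SL: "S powr (1 / q) \<le> Mg" using Lg Lnorm_injn[OF g, of q g] unfolding S_def q_def by simp
    have "S = (S powr (1 / q)) powr q" using q0 S0 by (simp add: powr_powr)
    also have "\<dots> \<le> \<bar>Mg\<bar> powr q" using SL q0 by (intro powr_mono2) auto
    finally have SG: "S \<le> G" unfolding G_def .
    have SG': "(\<Sum>i\<in>Idx. \<bar>g i\<bar> powr qexp p * hcell cell i) \<le> G" using SG unfolding S_def q_def .
    have Ag2: "(nrm Idx cell (?A g))^2 \<le> D"
      unfolding D_def
      by (rule Ag_bound[OF fin p K Mi hsum[OF g] SG' M0])
    have Ag: "nrm Idx cell (?A g) \<le> sqrt D" using Ag2 by (rule real_le_rsqrt)
    have BVb: "nrm Idx cell (f 1) + Jsum Idx cell f N \<le> \<bar>Mb\<bar>"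
      using BV_bound[OF g tp, of f] BV by linarith
    show "\<forall>s\<in>{0..t N}. Lnorm 2 (\<lambda>x. tildeU t (\<lambda>k. injn Idx cell (u k)) s x
                       - barU t (\<lambda>k. injn Idx cell (u k)) s x) \<le> C * taumax N t"
    proof
      fix s assume s: "s \<in> {0..t N}"
      then have s0: "0 \<le> s" and s1: "s \<le> t N" by auto
      define k where "k = kidx t s"
      have k1: "1 \<le> k" and kN: "k \<le> N" and sk: "s \<le> t k"
        using kidx_basic[OF tp s1] unfolding k_def by auto
      have sk': "t (k - 1) \<le> s" using kidx_lower[OF tp s0 s1] unfolding k_def .
      define \<tau> where "\<tau> = t k - t (k - 1)"
      have tau: "\<tau> > 0" unfolding \<tau>_def using tp_strict[OF tp kN, of "k - 1"] k1 by simp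
      define \<alpha> where "\<alpha> = (t k - s) / \<tau>"
      have a0: "0 \<le> \<alpha>" unfolding \<alpha>_def using sk tau by simp
      have a1: "\<alpha> \<le> 1" unfolding \<alpha>_def using sk' tau by (simp add: divide_le_eq \<tau>_def)
      have beta: "(s - t (k - 1)) / \<tau> = 1 - \<alpha>" unfolding \<alpha>_def using tau by (simp add: field_simps \<tau>_def)
      have fun_eq: "(\<lambda>x. tildeU t (\<lambda>k. injn Idx cell (u k)) s x - barU t (\<lambda>k. injn Idx cell (u k)) s x)
          = injn Idx cell (\<lambda>i. \<alpha> * (u (k - 1) i - u k i))"
      proof
        fix x
        have "tildeU t (\<lambda>k. injn Idx cell (u k)) s x - barU t (\<lambda>k. injn Idx cell (u k)) s x
            = \<alpha> * injn Idx cell (u (k - 1)) x + (1 - \<alpha>) * injn Idx cell (u k) x - injn Idx cell (u k) x"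
          unfolding tildeU_def barU_def Let_def k_def[symmetric] \<tau>_def[symmetric] \<alpha>_def[symmetric] beta ..
        also have "\<dots> = \<alpha> * (injn Idx cell (u (k - 1)) x - injn Idx cell (u k) x)"
          by (simp add: algebra_simps)
        also have "\<dots> = injn Idx cell (\<lambda>i. \<alpha> * (u (k - 1) i - u k i)) x"
          unfolding injn_diff injn_scale ..
        finally show "tildeU t (\<lambda>k. injn Idx cell (u k)) s x - barU t (\<lambda>k. injn Idx cell (u k)) s x
            = injn Idx cell (\<lambda>i. \<alpha> * (u (k - 1) i - u k i)) x" .
      qed
      have "Lnorm 2 (\<lambda>x. tildeU t (\<lambda>k. injn Idx cell (u k)) s x - barU t (\<lambda>k. injn Idx cell (u k)) s x)
          = nrm Idx cell (\<lambda>i. \<alpha> * (u (k - 1) i - u k i))"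
        unfolding fun_eq Lnorm2_injn[OF g] ..
      also have "\<dots> = \<alpha> * nrm Idx cell (\<lambda>i. u (k - 1) i - u k i)"
        using a0 by (rule nrm_scale)
      also have "nrm Idx cell (\<lambda>i. u (k - 1) i - u k i) = nrm Idx cell (\<lambda>i. u k i - u (k - 1) i)"
      proof -
        have "nrm Idx cell (\<lambda>i. u (k - 1) i - u k i) = nrm Idx cell (\<lambda>i. (-1) * (u k i - u (k - 1) i))"
          by simp
        also have "\<dots> = nrm Idx cell (\<lambda>i. u k i - u (k - 1) i)"
          by (simp only: nrm_abs_scale abs_neg_one mult_1)
        finally show ?thesis .
      qed
      also have "\<alpha> * nrm Idx cell (\<lambda>i. u k i - u (k - 1) i) \<le> nrm Idx cell (\<lambda>i. u k i - u (k - 1) i)"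
        by (rule mult_left_le_one_le[OF nrm_nonneg a0 a1])
      also have "\<dots> \<le> \<tau> * (nrm Idx cell (f 1) + nrm Idx cell (?A g) + Jsum Idx cell f k)"
        unfolding \<tau>_def by (rule step_bound[OF g p K tp sch k1 kN])
      also have "\<dots> \<le> \<tau> * (\<bar>Mb\<bar> + sqrt D)"
        using tau Ag BVb Jsum_mono[OF kN, of Idx cell f] by (intro mult_left_mono) auto
      also have "\<dots> \<le> taumax N t * C"
      proof (rule mult_mono)
        have "\<tau> \<in> (\<lambda>k. t (Suc k) - t k) ` {..<N}"
          using k1 kN unfolding \<tau>_def by (intro image_eqI[of _ _ "k - 1"]) auto
        then show "\<tau> \<le> taumax N t" unfolding taumax_def by (intro Max_ge) auto
        show "\<bar>Mb\<bar> + sqrt D \<le> C" unfolding C_def by simp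
        show "0 \<le> taumax N t" using \<open>\<tau> \<le> taumax N t\<close> tau by linarith
        show "0 \<le> \<bar>Mb\<bar> + sqrt D" using D0 by simp
      qed
      finally show "Lnorm 2 (\<lambda>x. tildeU t (\<lambda>k. injn Idx cell (u k)) s x
                       - barU t (\<lambda>k. injn Idx cell (u k)) s x) \<le> C * taumax N t"
        by (simp add: mult.commute)
    qed
  qed
qed

end
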